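(* Let $C\in\mathcal C_n$ and $A=\Xi^{-1}(C)$, and for $i,j\in[n]$ put $L_{ij}=\sum_{k=1}^n kA_{i,j,k}$. Then every maximal chain in $(\mathcal C_n,\preceq)$ from the minimum element $M_n$ to $C$ has the same length $r(C)$, and $$r(C)=\frac{69n^5+180n^4+170n^3+60n^2+4^{1+(-1)^n}n}{480}-\sum_{1\le i,j\le n}(n-i+1)(n-j+1)(n-L_{ij}+1).$$
   Context: Let $[n]=\{1,\dots,n\}$, $[0,n]=\{0,\dots,n\}$. A corner-sum hypermatrix of order $n$ is an integer array $C=(C_{i,j,k})_{i,j,k\in[0,n]}$ such that for all $i,j\in[0,n]$: $C_{i,j,0}=C_{i,0,j}=C_{0,i,j}=0$, $C_{i,j,n}=C_{i,n,j}=C_{n,i,j}=ij$, and for all $k\in[n]$ each of $C_{i,j,k}-C_{i,j,k-1}$, $C_{i,k,j}-C_{i,k-1,j}$, $C_{k,i,j}-C_{k-1,i,j}$ is an integer in $\{\max(0,i+j-n),\dots,\min(i,j)\}$. $\mathcal C_n$ is the set of these, ordered by $C\preceq D$ iff $C\ge D$ entrywise; its minimum element is $M_n$ with $(M_n)_{i,j,k}=\min(k\min(i,j),\,ij-(n-k)\max(0,i+j-n))$. For an array $C$ indexed by $[0,n]^3$, $\Xi^{-1}(C)$ is the array indexed by $[n]^3$ with $\Xi^{-1}(C)_{i,j,k}=C_{i,j,k}-C_{i-1,j,k}-C_{i,j-1,k}-C_{i,j,k-1}+C_{i-1,j-1,k}+C_{i-1,j,k-1}+C_{i,j-1,k-1}-C_{i-1,j-1,k-1}$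 (the inverse of the corner-sum map $\Xi(A)_{i,j,k}=\sum_{a\le i,b\le j,c\le k}A_{a,b,c}$). *)

theory Defs
  imports Complex_Main
begin

type_synonym hypermatrix = "nat \<Rightarrow> nat \<Rightarrow> nat \<Rightarrow> int"

text \<open>Arrays indexed by [0,n]^3 are modelled as functions nat => nat => nat => int
  that vanish outside [0,n]^3 (so each array has a unique representative).\<close>

definition step_ok :: "nat \<Rightarrow> nat \<Rightarrow> nat \<Rightarrow> int \<Rightarrow> bool" where
  "step_ok n i j d \<longleftrightarrow> max 0 (int i + int j - int n) \<le> d \<and> d \<le> min (int i) (int j)"

definition corner_sum_hm :: "nat \<Rightarrow> hypermatrix \<Rightarrow> bool" where
  "corner_sum_hm n C \<longleftrightarrow>
     (\<forall>i j k. (n < i \<or> n < j \<or> n < k) \<longrightarrow> C i j k = 0) \<and>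
     (\<forall>i\<le>n. \<forall>j\<le>n. C i j 0 = 0 \<and> C i 0 j = 0 \<and> C 0 i j = 0 \<and>
        C i j n = int i * int j \<and> C i n j = int i * int j \<and> C n i j = int i * int j) \<and>
     (\<forall>i\<le>n. \<forall>j\<le>n. \<forall>k\<in>{1..n}.
        step_ok n i j (C i j k - C i j (k - 1)) \<and>
        step_ok n i j (C i k j - C i (k - 1) j) \<and>
        step_ok n i j (C k i j - C (k - 1) i j))"

definition CSH :: "nat \<Rightarrow> hypermatrix set" where
  "CSH n = {C. corner_sum_hm n C}"

definition cs_le :: "nat \<Rightarrow> hypermatrix \<Rightarrow> hypermatrix \<Rightarrow> bool" where
  "cs_le n C D \<longleftrightarrow> (\<forall>i\<le>n. \<forall>j\<le>n. \<forall>k\<le>n. D i j k \<le> C i j k)"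

definition Mmin :: "nat \<Rightarrow> hypermatrix" where
  "Mmin n i j k = (if i \<le> n \<and> j \<le> n \<and> k \<le> n then
     min (int k * min (int i) (int j))
         (int i * int j - (int n - int k) * max 0 (int i + int j - int n))
   else 0)"

definition Xi_inv :: "hypermatrix \<Rightarrow> nat \<Rightarrow> nat \<Rightarrow> nat \<Rightarrow> int" where
  "Xi_inv C i j k = C i j k - C (i-1) j k - C i (j-1) k - C i j (k-1)
     + C (i-1) (j-1) k + C (i-1) j (k-1) + C i (j-1) (k-1) - C (i-1) (j-1) (k-1)"

definition L_val :: "nat \<Rightarrow> hypermatrix \<Rightarrow> nat \<Rightarrow> nat \<Rightarrow> int" where
  "L_val n C i j = (\<Sum>k=1..n. int k * Xi_inv C i j k)"

definition is_chain :: "nat \<Rightarrow> hypermatrix set \<Rightarrow> bool" where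
  "is_chain n S \<longleftrightarrow> S \<subseteq> CSH n \<and> (\<forall>x\<in>S. \<forall>y\<in>S. cs_le n x y \<or> cs_le n y x)"

definition cs_interval :: "nat \<Rightarrow> hypermatrix \<Rightarrow> hypermatrix \<Rightarrow> hypermatrix set" where
  "cs_interval n a b = {X \<in> CSH n. cs_le n a X \<and> cs_le n X b}"

definition maximal_chain :: "nat \<Rightarrow> hypermatrix \<Rightarrow> hypermatrix \<Rightarrow> hypermatrix set \<Rightarrow> bool" where
  "maximal_chain n a b S \<longleftrightarrow> is_chain n S \<and> a \<in> S \<and> b \<in> S \<and> S \<subseteq> cs_interval n a b \<and>
     (\<forall>T. is_chain n T \<and> T \<subseteq> cs_interval n a b \<and> S \<subseteq> T \<longrightarrow> T = S)"

end

theory Submission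
  imports Defs "HOL-Library.FuncSet"
begin

definition gs :: "nat \<Rightarrow> nat \<Rightarrow> nat \<Rightarrow> int" where
  "gs n i j = (\<Sum>k\<le>n. Mmin n i j k)"

lemma gs_sym: "gs n i j = gs n j i"
  unfolding gs_def Mmin_def by (rule sum.cong) (simp_all add: ac_simps)

lemma sum_min_split:
  fixes f g :: "nat \<Rightarrow> int"
  assumes "t \<le> n" "\<And>k. k \<le> t \<Longrightarrow> f k \<le> g k" "\<And>k. t \<le> k \<Longrightarrow> k \<le> n \<Longrightarrow> g k \<le> f k"
  shows "(\<Sum>k\<le>n. min (f k) (g k)) = (\<Sum>k\<le>t. f k) + (\<Sum>k\<in>{t<..n}. g k)"
proof -
  have u: "{..n} = {..t} \<union> {t<..n}" using assms(1) by auto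
  have "(\<Sum>k\<le>n. min (f k) (g k)) = (\<Sum>k\<le>t. min (f k) (g k)) + (\<Sum>k\<in>{t<..n}. min (f k) (g k))"
    unfolding u by (rule sum.union_disjoint) auto
  also have "(\<Sum>k\<le>t. min (f k) (g k)) = (\<Sum>k\<le>t. f k)"
    by (rule sum.cong) (auto simp: assms(2) min_absorb1)
  also have "(\<Sum>k\<in>{t<..n}. min (f k) (g k)) = (\<Sum>k\<in>{t<..n}. g k)"
    by (rule sum.cong) (auto simp: assms(3) min_absorb2)
  finally show ?thesis .
qed

lemma sum_k: "2 * (\<Sum>k\<le>t. int k * m) = m * int t * (int t + 1)"
  by (induction t) (simp_all add: algebra_simps)

lemma sum_lin: "t \<le> u \<Longrightarrow> 2 * (\<Sum>k\<in>{t<..u}. P - (c - int k) * l)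
   = 2*(int u - int t)*P - l*(2*(int u - int t)*c - int u*(int u+1) + int t*(int t+1))"
proof (induction u rule: dec_induct)
  case base then show ?case by simp
next
  case (step u)
  have "{t<..Suc u} = insert (Suc u) {t<..u}" using step by auto
  then show ?case using step by (simp add: algebra_simps)
qed

lemma gA2:
  assumes "i \<le> j" "i + j \<le> n"
  shows "2 * gs n i j = int i * int j * (2 * int n - int j + 1)"
proof -
  have l: "max 0 (int i + int j - int n) = 0" using assms by simp
  have "gs n i j = (\<Sum>k\<le>n. min (int k * int i) (int i * int j - (int n - int k) * 0))"
    unfolding gs_def Mmin_def using assms by (intro sum.cong) (auto simp: l min_absorb1)
  also have "\<dots> = (\<Sum>k\<le>j. int k * int i) + (\<Sum>k\<in>{j<..n}. int i * int j - (int n - int k) * 0)"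
  proof (intro sum_min_split)
    fix k assume "k \<le> j"
    then have "int k * int i \<le> int j * int i" by (intro mult_right_mono) auto
    then show "int k * int i \<le> int i * int j - (int n - int k) * 0" by (simp add: mult.commute)
  next
    fix k assume "j \<le> k"
    then have "int j * int i \<le> int k * int i" by (intro mult_right_mono) auto
    then show "int i * int j - (int n - int k) * 0 \<le> int k * int i" by (simp add: mult.commute)
  qed (use assms in simp)
  finally have "2 * gs n i j = 2 * (\<Sum>k\<le>j. int k * int i) + 2 * (\<Sum>k\<in>{j<..n}. int i * int j - (int n - int k) * 0)"
    by simp
  also have "\<dots> = int i * int j * (2 * int n - int j + 1)"
    using assms by (simp only: sum_k sum_lin) (simp add: algebra_simps)
  finally show ?thesis .
qed

lemma g3:
  assumes "i \<le> j" "n < i + j" "j \<le> n"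
  shows "2 * gs n i j = int i * (int n - int i) * (int n - int i + 1) + 2 * int i * int i * int j
     - (int i + int j - int n) * int i * (int i - 1)"
proof -
  let ?l = "int i + int j - int n"
  have l: "max 0 (int i + int j - int n) = ?l" using assms by simp
  have "gs n i j = (\<Sum>k\<le>n. min (int k * int i) (int i * int j - (int n - int k) * ?l))"
    unfolding gs_def Mmin_def using assms by (intro sum.cong) (auto simp: l min_absorb1)
  also have "\<dots> = (\<Sum>k\<le>n-i. int k * int i) + (\<Sum>k\<in>{n-i<..n}. int i * int j - (int n - int k) * ?l)"
  proof (intro sum_min_split)
    fix k assume k: "k \<le> n - i"
    have e: "int i * int j - (int n - int k) * ?l - int k * int i = (int n - int i - int k) * (int n - int j)"
      by (simp add: algebra_simps)
    have "0 \<le> (int n - int i - int k) * (int n - int j)" using k assms by simp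
    then show "int k * int i \<le> int i * int j - (int n - int k) * ?l" using e by linarith
  next
    fix k assume k: "n - i \<le> k" "k \<le> n"
    have e: "int i * int j - (int n - int k) * ?l - int k * int i = (int n - int i - int k) * (int n - int j)"
      by (simp add: algebra_simps)
    have "(int n - int i - int k) * (int n - int j) \<le> 0" using k assms
      by (intro mult_nonpos_nonneg) auto
    then show "int i * int j - (int n - int k) * ?l \<le> int k * int i" using e by linarith
  qed simp
  finally have "2 * gs n i j = 2 * (\<Sum>k\<le>n-i. int k * int i) + 2 * (\<Sum>k\<in>{n-i<..n}. int i * int j - (int n - int k) * ?l)"
    by simp
  also have "\<dots> = int i * (int n - int i) * (int n - int i + 1) + 2 * int i * int i * int j
     - (int i + int j - int n) * int i * (int i - 1)"
    using assms by (simp only: sum_k sum_lin of_nat_diff) (simp add: algebra_simps)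
  finally show ?thesis .
qed

lemma gA1:
  assumes "j \<le> i" "i + j \<le> n"
  shows "2 * gs n i j = int i * int j * (2 * int n - int i + 1)"
  using gA2[of j i n] assms by (simp add: gs_sym mult.commute add.commute)

lemma gB2:
  assumes "j \<le> i" "n < i + j" "i \<le> n"
  shows "2 * gs n i j = int j * (int n - int j) * (int n - int j + 1) + 2 * int j * int i * int j
     - (int i + int j - int n) * int j * (int j - 1)"
  using g3[of j i n] assms by (simp add: gs_sym algebra_simps)

lemma tele0:
  fixes Q :: "int \<Rightarrow> int"
  assumes "a \<le> b"
  shows "(\<Sum>j\<in>{a..<b}. Q (int j + 1) - Q (int j)) = Q (int b) - Q (int a)"
  using assms
proof (induction b rule: dec_induct)
  case base then show ?case by simp
next
  case (step b)
  then show ?case by (simp add: add.commute)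
qed

lemma tele:
  fixes f :: "nat \<Rightarrow> int" and Q :: "int \<Rightarrow> int"
  assumes "\<And>j. a \<le> j \<Longrightarrow> j < b \<Longrightarrow> f j = Q (int j + 1) - Q (int j)" "a \<le> b"
  shows "(\<Sum>j\<in>{a..<b}. f j) = Q (int b) - Q (int a)"
proof -
  have "(\<Sum>j\<in>{a..<b}. f j) = (\<Sum>j\<in>{a..<b}. Q (int j + 1) - Q (int j))"
    by (rule sum.cong) (use assms in auto)
  then show ?thesis using tele0[OF assms(2)] by simp
qed

lemma split2:
  fixes f :: "nat \<Rightarrow> int"
  assumes "a \<le> b" "b \<le> c"
  shows "(\<Sum>j\<in>{a..<c}. f j) = (\<Sum>j\<in>{a..<b}. f j) + (\<Sum>j\<in>{b..<c}. f j)"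
  using sum.atLeastLessThan_concat[OF assms, of f] by simp

lemma split3:
  fixes f :: "nat \<Rightarrow> int"
  assumes "a \<le> b" "b \<le> c" "c \<le> d"
  shows "(\<Sum>j\<in>{a..<d}. f j) = (\<Sum>j\<in>{a..<b}. f j) + (\<Sum>j\<in>{b..<c}. f j) + (\<Sum>j\<in>{c..<d}. f j)"
  using split2[of a b d f] split2[of b c d f] assms by simp

lemma piece:
  fixes F Q :: "int \<Rightarrow> int"
  assumes "\<And>j. a \<le> j \<Longrightarrow> j < b \<Longrightarrow> 2 * gs n i j = F (int j)"
    "\<And>J. Q (J+1) - Q J = 12 * F J" "a \<le> b"
  shows "(\<Sum>j\<in>{a..<b}. 12 * (2 * gs n i j)) = Q (int b) - Q (int a)"
  by (rule tele) (use assms in auto)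

definition R1 :: "int \<Rightarrow> int \<Rightarrow> int \<Rightarrow> int" where
  "R1 N I J = 6*I*(2*N-I+1)*J*(J-1)"
definition R2 :: "int \<Rightarrow> int \<Rightarrow> int \<Rightarrow> int" where
  "R2 N I J = -8*I*J+12*I*J^2-4*I*J^3-12*N*I*J+12*N*I*J^2"
definition R3 :: "int \<Rightarrow> int \<Rightarrow> int \<Rightarrow> int" where
  "R3 N I J = -6*I*J+6*I*J^2-6*I^2*J+6*I^2*J^2-12*N*I^2*J+12*N^2*I*J"
definition RB :: "int \<Rightarrow> int \<Rightarrow> int \<Rightarrow> int" where
  "RB N I J = -4*I*J+4*I*J^3-2*N*J+6*N*J^2-4*N*J^3-6*N^2*J+6*N^2*J^2"
definition HA :: "int \<Rightarrow> int \<Rightarrow> int" where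
  "HA N I = 4*(I^2-I^4)+4*N*I+12*N^2*I+8*N^3*I"
definition HB :: "int \<Rightarrow> int \<Rightarrow> int" where
  "HB N I = 4*I^2-4*I^4+16*N*I^3+2*N^2+12*N^2*I-24*N^2*I^2+20*N^3*I-2*N^4"
definition TA :: "int \<Rightarrow> int \<Rightarrow> int" where
  "TA N X = 48*X-120*X^2+120*X^4-48*X^5-120*N*X+120*N*X^2-360*N^2*X+360*N^2*X^2-240*N^3*X+240*N^3*X^2"
definition TB :: "int \<Rightarrow> int \<Rightarrow> int" where
  "TB N X = 48*X-120*X^2+120*X^4-48*X^5+240*N*X^2-480*N*X^3+240*N*X^4-480*N^2*X+1080*N^2*X^2-480*N^2*X^3-600*N^3*X+600*N^3*X^2-120*N^4*X"

lemma p4: "(x::int)^4 = x*x*x*x" by (simp add: numeral_eq_Suc)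
lemma p5: "(x::int)^5 = x*x*x*x*x" by (simp add: numeral_eq_Suc)
lemmas pw = power2_eq_square power3_eq_cube p4 p5

lemma R1d: "R1 N I (J+1) - R1 N I J = 12 * (I*J*(2*N-I+1))"
  unfolding R1_def by (simp add: algebra_simps pw)
lemma R2d: "R2 N I (J+1) - R2 N I J = 12 * (I*J*(2*N-J+1))"
  unfolding R2_def by (simp add: algebra_simps pw)
lemma R3d: "R3 N I (J+1) - R3 N I J = 12 * (I*(N-I)*(N-I+1)+2*I*I*J-(I+J-N)*I*(I-1))"
  unfolding R3_def by (simp add: algebra_simps pw)
lemma RBd: "RB N I (J+1) - RB N I J = 12 * (J*(N-J)*(N-J+1)+2*J*I*J-(I+J-N)*J*(J-1))"
  unfolding RB_def by (simp add: algebra_simps pw)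
lemma TAd: "TA N (X+1) - TA N X = 60 * HA N X"
  unfolding TA_def HA_def by (simp add: algebra_simps pw)
lemma TBd: "TB N (X+1) - TB N X = 60 * HB N X"
  unfolding TB_def HB_def by (simp add: algebra_simps pw)

lemma hA:
  assumes "2 * i \<le> n"
  shows "24 * (\<Sum>j\<le>n. gs n i j) = HA (int n) (int i)"
proof -
  have e: "{..n} = {0..<n+1}" by auto
  have "24 * (\<Sum>j\<le>n. gs n i j) = (\<Sum>j\<in>{0..<n+1}. 12 * (2 * gs n i j))"
    unfolding e by (simp add: sum_distrib_left)
  also have "\<dots> = (\<Sum>j\<in>{0..<i+1}. 12 * (2 * gs n i j)) + (\<Sum>j\<in>{i+1..<n-i+1}. 12 * (2 * gs n i j))
      + (\<Sum>j\<in>{n-i+1..<n+1}. 12 * (2 * gs n i j))"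
    by (rule split3) (use assms in auto)
  also have "(\<Sum>j\<in>{0..<i+1}. 12 * (2 * gs n i j)) = R1 (int n) (int i) (int (i+1)) - R1 (int n) (int i) (int 0)"
    by (rule piece[where F="\<lambda>J. int i*J*(2*int n-int i+1)"]) (use assms in \<open>auto intro!: gA1 simp: R1d\<close>)
  also have "(\<Sum>j\<in>{i+1..<n-i+1}. 12 * (2 * gs n i j)) = R2 (int n) (int i) (int (n-i+1)) - R2 (int n) (int i) (int (i+1))"
    by (rule piece[where F="\<lambda>J. int i*J*(2*int n-J+1)"]) (use assms in \<open>auto intro!: gA2 simp: R2d\<close>)
  also have "(\<Sum>j\<in>{n-i+1..<n+1}. 12 * (2 * gs n i j)) = R3 (int n) (int i) (int (n+1)) - R3 (int n) (int i) (int (n-i+1))"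
    by (rule piece[where F="\<lambda>J. int i*(int n-int i)*(int n-int i+1)+2*int i*int i*J-(int i+J-int n)*int i*(int i-1)"])
      (use assms in \<open>auto intro!: g3 simp: R3d\<close>)
  also have "R1 (int n) (int i) (int (i+1)) - R1 (int n) (int i) (int 0) + (R2 (int n) (int i) (int (n-i+1)) - R2 (int n) (int i) (int (i+1)))
     + (R3 (int n) (int i) (int (n+1)) - R3 (int n) (int i) (int (n-i+1))) = HA (int n) (int i)"
    using assms unfolding R1_def R2_def R3_def HA_def by (simp add: of_nat_diff algebra_simps pw)
  finally show ?thesis .
qed

lemma hB:
  assumes "n < 2 * i" "i \<le> n"
  shows "24 * (\<Sum>j\<le>n. gs n i j) = HB (int n) (int i)"
proof -
  have e: "{..n} = {0..<n+1}" by auto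
  have "24 * (\<Sum>j\<le>n. gs n i j) = (\<Sum>j\<in>{0..<n+1}. 12 * (2 * gs n i j))"
    unfolding e by (simp add: sum_distrib_left)
  also have "\<dots> = (\<Sum>j\<in>{0..<n-i+1}. 12 * (2 * gs n i j)) + (\<Sum>j\<in>{n-i+1..<i+1}. 12 * (2 * gs n i j))
      + (\<Sum>j\<in>{i+1..<n+1}. 12 * (2 * gs n i j))"
    by (rule split3) (use assms in auto)
  also have "(\<Sum>j\<in>{0..<n-i+1}. 12 * (2 * gs n i j)) = R1 (int n) (int i) (int (n-i+1)) - R1 (int n) (int i) (int 0)"
    by (rule piece[where F="\<lambda>J. int i*J*(2*int n-int i+1)"]) (use assms in \<open>auto intro!: gA1 simp: R1d\<close>)
  also have "(\<Sum>j\<in>{n-i+1..<i+1}. 12 * (2 * gs n i j)) = RB (int n) (int i) (int (i+1)) - RB (int n) (int i) (int (n-i+1))"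
    by (rule piece[where F="\<lambda>J. J*(int n-J)*(int n-J+1)+2*J*int i*J-(int i+J-int n)*J*(J-1)"])
      (use assms in \<open>auto intro!: gB2 simp: RBd\<close>)
  also have "(\<Sum>j\<in>{i+1..<n+1}. 12 * (2 * gs n i j)) = R3 (int n) (int i) (int (n+1)) - R3 (int n) (int i) (int (i+1))"
    by (rule piece[where F="\<lambda>J. int i*(int n-int i)*(int n-int i+1)+2*int i*int i*J-(int i+J-int n)*int i*(int i-1)"])
      (use assms in \<open>auto intro!: g3 simp: R3d\<close>)
  also have "R1 (int n) (int i) (int (n-i+1)) - R1 (int n) (int i) (int 0) + (RB (int n) (int i) (int (i+1)) - RB (int n) (int i) (int (n-i+1)))
     + (R3 (int n) (int i) (int (n+1)) - R3 (int n) (int i) (int (i+1))) = HB (int n) (int i)"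
    using assms unfolding R1_def RB_def R3_def HB_def by (simp add: of_nat_diff algebra_simps pw)
  finally show ?thesis .
qed

lemma total:
  "1440 * (\<Sum>i\<le>n. \<Sum>j\<le>n. gs n i j) = 3 * (69 * int n^5 + 180 * int n^4 + 170 * int n^3 + 60 * int n^2
     + (if even n then 16 else 1) * int n)"
proof -
  define m where "m = n div 2"
  have e: "{..n} = {0..<n+1}" by auto
  have mn: "m + 1 \<le> n + 1" unfolding m_def by simp
  have "1440 * (\<Sum>i\<le>n. \<Sum>j\<le>n. gs n i j) = (\<Sum>i\<in>{0..<n+1}. 60 * (24 * (\<Sum>j\<le>n. gs n i j)))"
    unfolding e by (simp add: sum_distrib_left)
  also have "\<dots> = (\<Sum>i\<in>{0..<m+1}. 60 * (24 * (\<Sum>j\<le>n. gs n i j))) + (\<Sum>i\<in>{m+1..<n+1}. 60 * (24 * (\<Sum>j\<le>n. gs n i j)))"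
    by (rule split2) (use mn in auto)
  also have "(\<Sum>i\<in>{0..<m+1}. 60 * (24 * (\<Sum>j\<le>n. gs n i j))) = TA (int n) (int (m+1)) - TA (int n) (int 0)"
    by (rule tele) (auto simp: hA m_def TAd[symmetric])
  also have "(\<Sum>i\<in>{m+1..<n+1}. 60 * (24 * (\<Sum>j\<le>n. gs n i j))) = TB (int n) (int (n+1)) - TB (int n) (int (m+1))"
    using mn by (intro tele) (auto simp: hB m_def TBd[symmetric])
  also have "TA (int n) (int (m+1)) - TA (int n) (int 0) + (TB (int n) (int (n+1)) - TB (int n) (int (m+1)))
     = 3 * (69 * int n^5 + 180 * int n^4 + 170 * int n^3 + 60 * int n^2 + (if even n then 16 else 1) * int n)"
  proof (cases "even n")
    case True
    then have "n = 2 * m" unfolding m_def by simp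
    then show ?thesis using True unfolding TA_def TB_def by (simp add: algebra_simps pw)
  next
    case False
    then have "n = 2 * m + 1" unfolding m_def by presburger
    then show ?thesis using False unfolding TA_def TB_def by (simp add: algebra_simps pw)
  qed
  finally show ?thesis .
qed

lemma abel1: fixes n :: nat and f :: "nat \<Rightarrow> int" shows "(\<Sum>k=1..n. int k * (f k - f (k-1))) = int n * f n - (\<Sum>k<n. (f k::int))"
  by (induction n) (simp_all add: algebra_simps)

lemma tel1: fixes n :: nat and g :: "nat \<Rightarrow> int" shows "(\<Sum>i=1..n. (g i - g (i-1))) = g n - (g 0::int)"
  by (induction n) simp_all

lemma abel2: fixes n :: nat and g :: "nat \<Rightarrow> int" shows "(\<Sum>i=1..n. (int n - int i + 1) * (g i - g (i-1))) = (\<Sum>i=1..n. g i) - int n * (g 0::int)"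
proof (induction n)
  case 0 then show ?case by simp
next
  case (Suc n)
  have "(\<Sum>i=1..Suc n. (int (Suc n) - int i + 1) * (g i - g (i-1)))
      = (\<Sum>i=1..Suc n. (int n - int i + 1) * (g i - g (i-1))) + (\<Sum>i=1..Suc n. (g i - g (i-1)))"
    by (simp add: sum.distrib[symmetric] algebra_simps)
  also have "(\<Sum>i=1..Suc n. (int n - int i + 1) * (g i - g (i-1))) = (\<Sum>i=1..n. (int n - int i + 1) * (g i - g (i-1)))"
    by simp
  also have "(\<Sum>i=1..Suc n. (g i - g (i-1))) = g (Suc n) - g 0" by (rule tel1)
  finally show ?case using Suc by (simp add: algebra_simps)
qed

lemma csh_props:
  assumes "corner_sum_hm n C"
  shows "\<And>i j. i \<le> n \<Longrightarrow> j \<le> n \<Longrightarrow> C i j 0 = 0" "\<And>i j. i \<le> n \<Longrightarrow> j \<le> n \<Longrightarrow> C i 0 j = 0"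
    "\<And>i j. i \<le> n \<Longrightarrow> j \<le> n \<Longrightarrow> C 0 i j = 0"
    "\<And>i j. i \<le> n \<Longrightarrow> j \<le> n \<Longrightarrow> C i j n = int i * int j"
    "\<And>i j. i \<le> n \<Longrightarrow> j \<le> n \<Longrightarrow> C i n j = int i * int j"
    "\<And>i j. i \<le> n \<Longrightarrow> j \<le> n \<Longrightarrow> C n i j = int i * int j"
  using assms unfolding corner_sum_hm_def by auto

lemma G_identity:
  assumes cs: "corner_sum_hm n C"
  shows "(\<Sum>i=1..n. \<Sum>j=1..n. (int n - int i + 1) * (int n - int j + 1) * (int n - L_val n C i j + 1))
       = (\<Sum>i\<le>n. \<Sum>j\<le>n. \<Sum>k\<le>n. C i j k)"
proof -
  define D where "D i j k = C i j k - C (i-1) j k - C i (j-1) k + C (i-1) (j-1) k" for i j k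
  define W where "W i = int n - int i + 1" for i
  note P = csh_props[OF cs]
  have L: "int n - L_val n C i j + 1 = 1 + (\<Sum>k<n. D i j k)" if "1 \<le> i" "i \<le> n" "1 \<le> j" "j \<le> n" for i j
  proof -
    have "L_val n C i j = (\<Sum>k=1..n. int k * (D i j k - D i j (k-1)))"
      unfolding L_val_def D_def Xi_inv_def by (rule sum.cong) (simp_all add: algebra_simps)
    also have "\<dots> = int n * D i j n - (\<Sum>k<n. D i j k)" by (rule abel1)
    also have "D i j n = 1"
    proof -
      have e: "int (i-1) = int i - 1" "int (j-1) = int j - 1" using that by auto
      show ?thesis unfolding D_def using that by (simp add: P(4) e algebra_simps)
    qed
    finally show ?thesis by simp
  qed
  have inner: "(\<Sum>j=1..n. W j * D i j k) = (\<Sum>j=1..n. C i j k - C (i-1) j k)" if "i \<le> n" "k \<le> n" for i k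
  proof -
    have "(\<Sum>j=1..n. W j * D i j k) = (\<Sum>j=1..n. (int n - int j + 1) * ((\<lambda>j. C i j k - C (i-1) j k) j - (\<lambda>j. C i j k - C (i-1) j k) (j-1)))"
      unfolding W_def D_def by (rule sum.cong) (simp_all add: algebra_simps)
    also have "\<dots> = (\<Sum>j=1..n. C i j k - C (i-1) j k) - int n * (C i 0 k - C (i-1) 0 k)" by (rule abel2)
    also have "C i 0 k - C (i-1) 0 k = 0" using P(2)[of i k] P(2)[of "i-1" k] that by simp
    finally show ?thesis by simp
  qed
  have outer: "(\<Sum>i=1..n. W i * (\<Sum>j=1..n. W j * D i j k)) = (\<Sum>i=1..n. \<Sum>j=1..n. C i j k)" if "k \<le> n" for k
  proof -
    have "(\<Sum>i=1..n. W i * (\<Sum>j=1..n. W j * D i j k)) = (\<Sum>i=1..n. W i * (\<Sum>j=1..n. C i j k - C (i-1) j k))"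
      by (rule sum.cong) (use inner that in auto)
    also have "\<dots> = (\<Sum>j=1..n. \<Sum>i=1..n. W i * (C i j k - C (i-1) j k))"
      by (simp add: sum_distrib_left) (rule sum.swap)
    also have "\<dots> = (\<Sum>j=1..n. \<Sum>i=1..n. C i j k)"
    proof (rule sum.cong)
      fix j assume j: "j \<in> {1..n}"
      have "(\<Sum>i=1..n. W i * (C i j k - C (i-1) j k)) = (\<Sum>i=1..n. (int n - int i + 1) * ((\<lambda>i. C i j k) i - (\<lambda>i. C i j k) (i-1)))"
        unfolding W_def by simp
      also have "\<dots> = (\<Sum>i=1..n. C i j k) - int n * C 0 j k" by (rule abel2)
      also have "C 0 j k = 0" using P(3)[of j k] j that by simp
      finally show "(\<Sum>i=1..n. W i * (C i j k - C (i-1) j k)) = (\<Sum>i=1..n. C i j k)" by simp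
    qed simp
    also have "\<dots> = (\<Sum>i=1..n. \<Sum>j=1..n. C i j k)" by (rule sum.swap)
    finally show ?thesis .
  qed
  have Wsum: "(\<Sum>i=1..n. W i) = (\<Sum>i=1..n. int i)"
  proof -
    have "(\<Sum>i=1..n. W i) = (\<Sum>i=1..n. (int n - int i + 1) * ((\<lambda>i. int i) i - (\<lambda>i. int i) (i-1)))"
      unfolding W_def by (rule sum.cong) auto
    also have "\<dots> = (\<Sum>i=1..n. int i) - int n * int 0" by (rule abel2)
    finally show ?thesis by simp
  qed
  have "(\<Sum>i=1..n. \<Sum>j=1..n. W i * W j * (int n - L_val n C i j + 1))
      = (\<Sum>i=1..n. \<Sum>j=1..n. W i * W j + W i * W j * (\<Sum>k<n. D i j k))"
  proof (intro sum.cong refl)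
    fix i j assume "i \<in> {1..n}" "j \<in> {1..n}"
    then have "int n - L_val n C i j + 1 = 1 + (\<Sum>k<n. D i j k)" by (intro L) auto
    then show "W i * W j * (int n - L_val n C i j + 1) = W i * W j + W i * W j * (\<Sum>k<n. D i j k)"
      by (simp add: algebra_simps)
  qed
  also have "\<dots> = (\<Sum>i=1..n. \<Sum>j=1..n. W i * W j) + (\<Sum>i=1..n. \<Sum>j=1..n. W i * W j * (\<Sum>k<n. D i j k))"
    by (simp add: sum.distrib)
  also have "(\<Sum>i=1..n. \<Sum>j=1..n. W i * W j) = (\<Sum>i=1..n. \<Sum>j=1..n. int i * int j)"
    using Wsum by (simp add: sum_product[symmetric])
  also have "(\<Sum>i=1..n. \<Sum>j=1..n. W i * W j * (\<Sum>k<n. D i j k)) = (\<Sum>k<n. \<Sum>i=1..n. W i * (\<Sum>j=1..n. W j * D i j k))"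
    by (simp add: sum_distrib_left sum.swap[of _ "{..<n}"] algebra_simps)
  also have "\<dots> = (\<Sum>k<n. \<Sum>i=1..n. \<Sum>j=1..n. C i j k)"
    by (rule sum.cong) (use outer in auto)
  also have "(\<Sum>i=1..n. \<Sum>j=1..n. int i * int j) + (\<Sum>k<n. \<Sum>i=1..n. \<Sum>j=1..n. C i j k)
       = (\<Sum>i=1..n. \<Sum>j=1..n. \<Sum>k\<le>n. C i j k)"
  proof -
    have "(\<Sum>i=1..n. \<Sum>j=1..n. \<Sum>k\<le>n. C i j k) = (\<Sum>i=1..n. \<Sum>j=1..n. (\<Sum>k<n. C i j k) + int i * int j)"
      by (intro sum.cong refl) (simp add: lessThan_Suc_atMost[symmetric] P(4))
    also have "\<dots> = (\<Sum>i=1..n. \<Sum>j=1..n. int i * int j) + (\<Sum>i=1..n. \<Sum>j=1..n. \<Sum>k<n. C i j k)"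
      by (simp add: sum.distrib)
    also have "(\<Sum>i=1..n. \<Sum>j=1..n. \<Sum>k<n. C i j k) = (\<Sum>k<n. \<Sum>i=1..n. \<Sum>j=1..n. C i j k)"
      by (simp add: sum.swap[of _ "{..<n}"] sum.swap[of _ "{1..n}" "{..<n}"])
    finally show ?thesis by simp
  qed
  also have "(\<Sum>i=1..n. \<Sum>j=1..n. \<Sum>k\<le>n. C i j k) = (\<Sum>i\<le>n. \<Sum>j\<le>n. \<Sum>k\<le>n. C i j k)"
  proof -
    have a: "{..n} = insert 0 {1..n}" by auto
    have "(\<Sum>i\<le>n. \<Sum>j\<le>n. \<Sum>k\<le>n. C i j k) = (\<Sum>i=1..n. \<Sum>j\<le>n. \<Sum>k\<le>n. C i j k)"
      unfolding a by (simp add: P(3))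
    also have "\<dots> = (\<Sum>i=1..n. \<Sum>j=1..n. \<Sum>k\<le>n. C i j k)"
      by (rule sum.cong) (auto simp: a P(2))
    finally show ?thesis by simp
  qed
  finally show ?thesis unfolding W_def .
qed

lemma csh_out: "C \<in> CSH n \<Longrightarrow> n < i \<or> n < j \<or> n < k \<Longrightarrow> C i j k = 0"
  unfolding CSH_def corner_sum_hm_def by (simp only: mem_Collect_eq)

lemma csh_cs: "C \<in> CSH n \<Longrightarrow> corner_sum_hm n C"
  unfolding CSH_def by simp

lemma csh_steps:
  assumes "C \<in> CSH n" "i \<le> n" "j \<le> n" "1 \<le> k" "k \<le> n"
  shows "step_ok n i j (C i j k - C i j (k-1)) \<and> step_ok n i j (C i k j - C i (k-1) j) \<and>
    step_ok n i j (C k i j - C (k-1) i j)"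
proof -
  have H: "\<forall>i\<le>n. \<forall>j\<le>n. \<forall>k\<in>{1..n}.
        step_ok n i j (C i j k - C i j (k - 1)) \<and>
        step_ok n i j (C i k j - C i (k - 1) j) \<and>
        step_ok n i j (C k i j - C (k - 1) i j)"
    using assms(1) unfolding CSH_def corner_sum_hm_def by (simp only: mem_Collect_eq) (elim conjE)
  have "k \<in> {1..n}" using assms by simp
  then show ?thesis using H assms(2,3) by blast
qed

lemma csh_step3: "C \<in> CSH n \<Longrightarrow> i \<le> n \<Longrightarrow> j \<le> n \<Longrightarrow> 1 \<le> k \<Longrightarrow> k \<le> n \<Longrightarrow>
   step_ok n i j (C i j k - C i j (k-1))"
  using csh_steps by blast
lemma csh_step2: "C \<in> CSH n \<Longrightarrow> i \<le> n \<Longrightarrow> j \<le> n \<Longrightarrow> 1 \<le> k \<Longrightarrow> k \<le> n \<Longrightarrow>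
   step_ok n i j (C i k j - C i (k-1) j)"
  using csh_steps by blast
lemma csh_step1: "C \<in> CSH n \<Longrightarrow> i \<le> n \<Longrightarrow> j \<le> n \<Longrightarrow> 1 \<le> k \<Longrightarrow> k \<le> n \<Longrightarrow>
   step_ok n i j (C k i j - C (k-1) i j)"
  using csh_steps by blast

lemma csh_ext:
  assumes "X \<in> CSH n" "Y \<in> CSH n" "\<And>i j k. i \<le> n \<Longrightarrow> j \<le> n \<Longrightarrow> k \<le> n \<Longrightarrow> X i j k = Y i j k"
  shows "X = Y"
proof (intro ext)
  fix i j k
  show "X i j k = Y i j k"
  proof (cases "i \<le> n \<and> j \<le> n \<and> k \<le> n")
    case True then show ?thesis using assms(3) by blast
  next
    case False then have "n < i \<or> n < j \<or> n < k" by linarith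
    then show ?thesis using csh_out[OF assms(1)] csh_out[OF assms(2)] by metis
  qed
qed

definition Box :: "nat \<Rightarrow> (nat \<times> nat \<times> nat) set" where
  "Box n = {..n} \<times> {..n} \<times> {..n}"

definition sC :: "nat \<Rightarrow> hypermatrix \<Rightarrow> int" where
  "sC n X = (\<Sum>(i,j,k)\<in>Box n. X i j k)"

lemma finite_Box[simp]: "finite (Box n)" unfolding Box_def by simp

lemma sC_nested: "sC n X = (\<Sum>i\<le>n. \<Sum>j\<le>n. \<Sum>k\<le>n. X i j k)"
  unfolding sC_def Box_def by (simp add: sum.cartesian_product)

lemma cs_le_trans: "cs_le n X Y \<Longrightarrow> cs_le n Y Z \<Longrightarrow> cs_le n X Z"
  unfolding cs_le_def by (meson order_trans)

lemma cs_le_refl: "cs_le n X X"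
  unfolding cs_le_def by simp

lemma sC_mono: "cs_le n X Y \<Longrightarrow> sC n Y \<le> sC n X"
  unfolding sC_def cs_le_def Box_def by (intro sum_mono) auto

lemma sC_strict:
  assumes "X \<in> CSH n" "Y \<in> CSH n" "cs_le n X Y" "X \<noteq> Y"
  shows "sC n Y < sC n X"
proof -
  obtain i j k where p: "i \<le> n" "j \<le> n" "k \<le> n" "X i j k \<noteq> Y i j k"
    using csh_ext[OF assms(1,2)] assms(4) by blast
  have "Y i j k \<le> X i j k" using p assms(3) unfolding cs_le_def by blast
  then have lt: "Y i j k < X i j k" using p(4) by simp
  have le: "\<forall>x\<in>Box n. (case x of (i,j,k) \<Rightarrow> Y i j k) \<le> (case x of (i,j,k) \<Rightarrow> X i j k)"
    using assms(3) unfolding cs_le_def Box_def by auto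
  have ex: "\<exists>x\<in>Box n. (case x of (i,j,k) \<Rightarrow> Y i j k) < (case x of (i,j,k) \<Rightarrow> X i j k)"
    using lt p unfolding Box_def by (intro bexI[of _ "(i,j,k)"]) auto
  show ?thesis unfolding sC_def by (rule sum_strict_mono_ex1[OF finite_Box le ex])
qed

lemma cs_antisym: "X \<in> CSH n \<Longrightarrow> Y \<in> CSH n \<Longrightarrow> cs_le n X Y \<Longrightarrow> cs_le n Y X \<Longrightarrow> X = Y"
  unfolding cs_le_def by (rule csh_ext) (assumption, assumption, meson order.antisym)

lemma sC_eq: "X \<in> CSH n \<Longrightarrow> Y \<in> CSH n \<Longrightarrow> cs_le n X Y \<Longrightarrow> sC n X = sC n Y \<Longrightarrow> X = Y"
  using sC_strict by fastforce

lemma M_in_box: "i \<le> n \<Longrightarrow> j \<le> n \<Longrightarrow> k \<le> n \<Longrightarrow> Mmin n i j k =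
   min (int k * min (int i) (int j)) (int i * int j - (int n - int k) * max 0 (int i + int j - int n))"
  unfolding Mmin_def by simp

lemma M_swap12: "Mmin n i j k = Mmin n j i k"
  unfolding Mmin_def by (simp add: ac_simps)

lemma min_mult_nonneg: assumes "0 \<le> (p::int)" shows "p * min x y = min (p * x) (p * y)"
proof (cases "x \<le> y")
  case True
  then have "p * x \<le> p * y" using assms by (rule mult_left_mono)
  then show ?thesis using True by (simp add: min_absorb1)
next
  case False
  then have "p * y \<le> p * x" using assms by (intro mult_left_mono) auto
  then show ?thesis using False by (simp add: min_absorb2)
qed

lemma M_sym_form:
  assumes "i \<le> n" "j \<le> n" "k \<le> n"
  shows "Mmin n i j k = min (min (int k * int i) (int k * int j))
     (min (int i * int j) (int i * int j + int j * int k + int k * int i - int n * (int i + int j + int k) + int n * int n))"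
proof -
  have a: "int k * min (int i) (int j) = min (int k * int i) (int k * int j)"
    by (rule min_mult_nonneg) simp
  have b: "int i * int j - (int n - int k) * max 0 (int i + int j - int n)
      = min (int i * int j) (int i * int j - (int n - int k) * (int i + int j - int n))"
  proof (cases "int i + int j - int n \<le> 0")
    case True
    have "(int n - int k) * (int i + int j - int n) \<le> 0" using True assms by (intro mult_nonneg_nonpos) auto
    then show ?thesis using True by (simp add: min_def)
  next
    case False
    have "0 \<le> (int n - int k) * (int i + int j - int n)" using False assms by (intro mult_nonneg_nonneg) auto
    then show ?thesis using False by (simp add: min_def)
  qed
  have c: "int i * int j - (int n - int k) * (int i + int j - int n)
     = int i * int j + int j * int k + int k * int i - int n * (int i + int j + int k) + int n * int n"
    by (simp add: algebra_simps)
  show ?thesis unfolding M_in_box[OF assms] a b c ..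
qed

lemma M_swap23:
  assumes "i \<le> n" "j \<le> n" "k \<le> n"
  shows "Mmin n i j k = Mmin n i k j"
proof -
  have q: "int i * int j + int j * int k + int k * int i - int n * (int i + int j + int k) + int n * int n
     = int i * int k + int k * int j + int j * int i - int n * (int i + int k + int j) + int n * int n"
    by (simp add: algebra_simps)
  show ?thesis unfolding M_sym_form[OF assms] M_sym_form[of i n k j, OF assms(1,3,2)] q
    by (simp add: ac_simps)
qed

lemma min_step: "(l::int) \<le> m \<Longrightarrow> l \<le> min (a + m) (b + l) - min a b \<and> min (a + m) (b + l) - min a b \<le> m"
  by (auto simp: min_def)

lemma M_step3:
  assumes "i \<le> n" "j \<le> n" "1 \<le> k" "k \<le> n"
  shows "step_ok n i j (Mmin n i j k - Mmin n i j (k-1))"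
proof -
  let ?m = "min (int i) (int j)" and ?l = "max 0 (int i + int j - int n)"
  have lm: "?l \<le> ?m" using assms by auto
  have e1: "Mmin n i j k = min (int (k-1) * ?m + ?m) ((int i * int j - (int n - int (k-1)) * ?l) + ?l)"
    using assms by (simp add: M_in_box of_nat_diff algebra_simps)
  have e2: "Mmin n i j (k-1) = min (int (k-1) * ?m) (int i * int j - (int n - int (k-1)) * ?l)"
    using assms by (simp add: M_in_box)
  show ?thesis unfolding step_ok_def e1 e2 using min_step[OF lm] by simp
qed

lemma M_step2:
  assumes "i \<le> n" "j \<le> n" "1 \<le> k" "k \<le> n"
  shows "step_ok n i j (Mmin n i k j - Mmin n i (k-1) j)"
proof -
  have "Mmin n i k j = Mmin n i j k" using assms by (intro M_swap23[symmetric]) auto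
  moreover have "Mmin n i (k-1) j = Mmin n i j (k-1)" using assms by (intro M_swap23[symmetric]) auto
  ultimately show ?thesis using M_step3[OF assms] by simp
qed

lemma M_step1:
  assumes "i \<le> n" "j \<le> n" "1 \<le> k" "k \<le> n"
  shows "step_ok n i j (Mmin n k i j - Mmin n (k-1) i j)"
proof -
  have "Mmin n k i j = Mmin n i k j" by (rule M_swap12)
  moreover have "Mmin n (k-1) i j = Mmin n i (k-1) j" by (rule M_swap12)
  ultimately show ?thesis using M_step2[OF assms] by simp
qed

lemma M_zero:
  assumes "i \<le> n" "j \<le> n"
  shows "Mmin n i j 0 = 0"
proof -
  have "0 \<le> int i * int j - int n * max 0 (int i + int j - int n)"
  proof (cases "int i + int j - int n \<le> 0")
    case True then show ?thesis by simp
  next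
    case False
    have "int i * int j - int n * (int i + int j - int n) = (int n - int i) * (int n - int j)"
      by (simp add: algebra_simps)
    moreover have "0 \<le> (int n - int i) * (int n - int j)" using assms by simp
    ultimately show ?thesis using False by simp
  qed
  then show ?thesis using assms by (simp add: M_in_box)
qed

lemma M_top:
  assumes "i \<le> n" "j \<le> n"
  shows "Mmin n i j n = int i * int j"
proof -
  have "int i * int j \<le> int n * min (int i) (int j)"
  proof (cases "i \<le> j")
    case True
    then have "int j * int i \<le> int n * int i" using assms by (intro mult_right_mono) auto
    then show ?thesis using True by (simp add: mult.commute)
  next
    case False
    then have "int i * int j \<le> int n * int j" using assms by (intro mult_right_mono) auto
    then show ?thesis using False by simp
  qed
  then show ?thesis using assms by (simp add: M_in_box)
qed

lemma M_in_CSH: "Mmin n \<in> CSH n"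
  unfolding CSH_def corner_sum_hm_def
proof (intro CollectI conjI allI impI ballI)
  fix i j k :: nat assume "n < i \<or> n < j \<or> n < k"
  then show "Mmin n i j k = 0" unfolding Mmin_def by auto
next
  fix i j assume ij: "i \<le> n" "j \<le> n"
  show "Mmin n i j 0 = 0" using M_zero[OF ij] .
  show "Mmin n i 0 j = 0" using M_zero[OF ij] ij by (simp add: M_swap23[of i n 0 j])
  show "Mmin n 0 i j = 0" using M_zero[OF ij] ij by (simp add: M_swap12[of n 0 i j] M_swap23[of i n 0 j])
  show "Mmin n i j n = int i * int j" using M_top[OF ij] .
  show "Mmin n i n j = int i * int j" using M_top[OF ij] ij by (simp add: M_swap23[of i n n j])
  show "Mmin n n i j = int i * int j" using M_top[OF ij] ij by (simp add: M_swap12[of n n i j] M_swap23[of i n n j])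
next
  fix i j k assume "i \<le> n" "j \<le> n" "k \<in> {1..n}"
  then show "step_ok n i j (Mmin n i j k - Mmin n i j (k - 1))"
    "step_ok n i j (Mmin n i k j - Mmin n i (k - 1) j)"
    "step_ok n i j (Mmin n k i j - Mmin n (k - 1) i j)"
    using M_step3 M_step2 M_step1 by auto
qed

lemma csh_bounds:
  assumes "C \<in> CSH n" "i \<le> n" "j \<le> n"
  shows "k \<le> n \<Longrightarrow> 0 \<le> C i j k \<and> C i j k \<le> int k * min (int i) (int j)"
proof (induction k)
  case 0 then show ?case using csh_props(1)[OF csh_cs[OF assms(1)] assms(2,3)] by simp
next
  case (Suc k)
  have "step_ok n i j (C i j (Suc k) - C i j (Suc k - 1))" using csh_step3[OF assms, of "Suc k"] Suc.prems by simp
  then have s: "max 0 (int i + int j - int n) \<le> C i j (Suc k) - C i j k" "C i j (Suc k) - C i j k \<le> min (int i) (int j)"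
    unfolding step_ok_def by simp_all
  have e: "int (Suc k) * min (int i) (int j) = min (int i) (int j) + int k * min (int i) (int j)"
    by (simp add: algebra_simps)
  have "0 \<le> max 0 (int i + int j - int n)" by simp
  then show ?case using Suc s e by linarith
qed

lemma csh_upper2:
  assumes "C \<in> CSH n" "i \<le> n" "j \<le> n"
  shows "d \<le> n \<Longrightarrow> C i j (n - d) \<le> int i * int j - int d * max 0 (int i + int j - int n)"
proof (induction d)
  case 0 then show ?case using csh_props(4)[OF csh_cs[OF assms(1)] assms(2,3)] by simp
next
  case (Suc d)
  have s: "step_ok n i j (C i j (n - d) - C i j (n - d - 1))" using csh_step3[OF assms, of "n-d"] Suc.prems by simp
  have "n - Suc d = n - d - 1" by simp
  then show ?case using Suc s unfolding step_ok_def by (simp add: algebra_simps)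
qed

lemma M_max:
  assumes "C \<in> CSH n"
  shows "cs_le n (Mmin n) C"
  unfolding cs_le_def
proof (intro allI impI)
  fix i j k assume a: "i \<le> n" "j \<le> n" "k \<le> n"
  have 1: "C i j k \<le> int k * min (int i) (int j)" using csh_bounds[OF assms a(1,2) a(3)] by simp
  have "C i j (n - (n - k)) \<le> int i * int j - int (n - k) * max 0 (int i + int j - int n)"
    using csh_upper2[OF assms a(1,2), of "n-k"] by simp
  then have 2: "C i j k \<le> int i * int j - (int n - int k) * max 0 (int i + int j - int n)"
    using a by (simp add: of_nat_diff)
  show "C i j k \<le> Mmin n i j k" using 1 2 a by (simp add: M_in_box)
qed

lemma csh_range:
  assumes "C \<in> CSH n" "i \<le> n" "j \<le> n" "k \<le> n"
  shows "C i j k \<in> {0..int n * int n}"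
proof -
  have b: "0 \<le> C i j k \<and> C i j k \<le> int k * min (int i) (int j)" using csh_bounds[OF assms(1,2,3) assms(4)] .
  have "int k * min (int i) (int j) \<le> int n * int n"
    using assms by (intro mult_mono) auto
  then show ?thesis using b by simp
qed

definition restr :: "nat \<Rightarrow> hypermatrix \<Rightarrow> (nat \<times> nat \<times> nat \<Rightarrow> int)" where
  "restr n X = restrict (\<lambda>(i,j,k). X i j k) (Box n)"

lemma finite_CSH: "finite (CSH n)"
proof -
  let ?r = "restr n"
  have "inj_on ?r (CSH n)"
  proof (rule inj_onI)
    fix X Y assume XY: "X \<in> CSH n" "Y \<in> CSH n" "?r X = ?r Y"
    show "X = Y"
    proof (rule csh_ext[OF XY(1,2)])
      fix i j k assume "i \<le> n" "j \<le> n" "k \<le> n"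
      then have "(i,j,k) \<in> Box n" unfolding Box_def by auto
      moreover have "?r X (i,j,k) = ?r Y (i,j,k)" using XY(3) by simp
      ultimately show "X i j k = Y i j k" unfolding restr_def by simp
    qed
  qed
  moreover have "?r ` CSH n \<subseteq> PiE (Box n) (\<lambda>_. {0..int n * int n})"
  proof
    fix f assume "f \<in> ?r ` CSH n"
    then obtain X where X: "X \<in> CSH n" "f = ?r X" by blast
    show "f \<in> PiE (Box n) (\<lambda>_. {0..int n * int n})"
      unfolding X(2) restr_def Box_def using csh_range[OF X(1)] by auto
  qed
  then have "finite (?r ` CSH n)" by (rule finite_subset) (intro finite_PiE; simp)
  ultimately show ?thesis using finite_imageD by blast
qed

lemma down_arith:
  assumes "1 \<le> x" "x < n" "1 \<le> y" "y < n"
  shows "int n * max 0 (int x + int y - int n) < int x * int y"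
proof (cases "int x + int y - int n \<le> 0")
  case True
  have "0 < int x * int y" using assms by simp
  then show ?thesis using True by simp
next
  case False
  have e: "int x * int y - int n * (int x + int y - int n) = (int n - int x) * (int n - int y)"
    by (simp add: algebra_simps)
  have "0 < (int n - int x) * (int n - int y)" using assms by simp
  then show ?thesis using False e by simp
qed

lemma up_arith:
  assumes "1 \<le> x" "x < n" "1 \<le> y" "y < n"
  shows "int x * int y < int n * min (int x) (int y)"
proof (cases "x \<le> y")
  case True
  have "int y * int x < int n * int x" using assms by (intro mult_strict_right_mono) auto
  then show ?thesis using True by (simp add: mult.commute)
next
  case False
  have "int x * int y < int n * int y" using assms by (intro mult_strict_right_mono) auto
  then show ?thesis using False by simp
qed

lemma abstract_down:
  fixes cq cr dq dr lo N wq wr u :: int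
  assumes "dq < cq" "lo \<le> dq - dr" "cq - cr \<le> lo"
    "dr < cr \<Longrightarrow> N * cr - wr \<le> N * cq - wq" "wq - wr = u" "N * lo < u" "0 \<le> N"
  shows False
proof -
  have "dr < cr" using assms(1-3) by linarith
  then have 1: "N * cr - wr \<le> N * cq - wq" using assms(4) by simp
  have "N * (cq - lo) \<le> N * cr" using assms(3,7) by (intro mult_left_mono) auto
  then have "N * cq - N * lo \<le> N * cr" by (simp add: right_diff_distrib)
  then show False using 1 assms(5,6) by linarith
qed

lemma abstract_up:
  fixes cq cr dq dr hi N wq wr u :: int
  assumes "dq < cq" "dr - dq \<le> hi" "hi \<le> cr - cq"
    "dr < cr \<Longrightarrow> N * cr - wr \<le> N * cq - wq" "wr - wq = u" "u < N * hi" "0 \<le> N"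
  shows False
proof -
  have "dr < cr" using assms(1-3) by linarith
  then have 1: "N * cr - wr \<le> N * cq - wq" using assms(4) by simp
  have "N * (cq + hi) \<le> N * cr" using assms(3,7) by (intro mult_left_mono) auto
  then have "N * cq + N * hi \<le> N * cr" by (simp add: distrib_left)
  then show False using 1 assms(5,6) by linarith
qed

lemma step_ok_dec: "step_ok n i j d \<Longrightarrow> max 0 (int i + int j - int n) < d \<Longrightarrow> step_ok n i j (d - 1)"
  unfolding step_ok_def by simp
lemma step_ok_inc: "step_ok n i j d \<Longrightarrow> d < min (int i) (int j) \<Longrightarrow> step_ok n i j (d + 1)"
  unfolding step_ok_def by simp
lemma step_ok_lo: "step_ok n i j d \<Longrightarrow> max 0 (int i + int j - int n) \<le> d"
  unfolding step_ok_def by simp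
lemma step_ok_hi: "step_ok n i j d \<Longrightarrow> d \<le> min (int i) (int j)"
  unfolding step_ok_def by simp

lemma down_step:
  assumes C: "C \<in> CSH n" and D: "D \<in> CSH n" and le: "cs_le n C D" and ne: "C \<noteq> D"
  shows "\<exists>E\<in>CSH n. cs_le n C E \<and> cs_le n E D \<and> sC n E = sC n C - 1"
proof -
  define P where "P = {p \<in> Box n. case p of (i,j,k) \<Rightarrow> D i j k < C i j k}"
  define \<psi> where "\<psi> p = (case p of (i,j,k) \<Rightarrow> int n * C i j k - int i * int j * int k)" for p
  have Dle: "\<And>i j k. i \<le> n \<Longrightarrow> j \<le> n \<Longrightarrow> k \<le> n \<Longrightarrow> D i j k \<le> C i j k"
    using le unfolding cs_le_def by blast
  obtain i0 j0 k0 where p0: "i0 \<le> n" "j0 \<le> n" "k0 \<le> n" "C i0 j0 k0 \<noteq> D i0 j0 k0"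
    using csh_ext[OF C D] ne by blast
  have "(i0,j0,k0) \<in> P" using p0 Dle[of i0 j0 k0] unfolding P_def Box_def by auto
  then have Pne: "P \<noteq> {}" by blast
  have Pfin: "finite P" unfolding P_def by simp
  have "Max (\<psi> ` P) \<in> \<psi> ` P" using Pne Pfin by (intro Max_in) auto
  then obtain q where q: "q \<in> P" "\<psi> q = Max (\<psi> ` P)" by auto
  have qmax: "\<psi> p \<le> \<psi> q" if "p \<in> P" for p using q(2) Pfin that by simp
  obtain a b c where qabc: "q = (a,b,c)" by (cases q) auto
  have box: "a \<le> n" "b \<le> n" "c \<le> n" and lt: "D a b c < C a b c"
    using q(1) unfolding qabc P_def Box_def by auto
  have maxq: "int n * C i j k - int i * int j * int k \<le> int n * C a b c - int a * int b * int c"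
    if "i \<le> n" "j \<le> n" "k \<le> n" "D i j k < C i j k" for i j k
    using qmax[of "(i,j,k)"] that unfolding P_def Box_def \<psi>_def qabc by auto
  note PC = csh_props[OF csh_cs[OF C]] and PD = csh_props[OF csh_cs[OF D]]
  have a0: "a \<noteq> 0" using lt PC(3)[of b c] PD(3)[of b c] box by (intro notI) simp
  have an: "a \<noteq> n" using lt PC(6)[of b c] PD(6)[of b c] box by (intro notI) simp
  have b0: "b \<noteq> 0" using lt PC(2)[of a c] PD(2)[of a c] box by (intro notI) simp
  have bn: "b \<noteq> n" using lt PC(5)[of a c] PD(5)[of a c] box by (intro notI) simp
  have c0: "c \<noteq> 0" using lt PC(1)[of a b] PD(1)[of a b] box by (intro notI) simp
  have cn: "c \<noteq> n" using lt PC(4)[of a b] PD(4)[of a b] box by (intro notI) simp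
  have ia: "1 \<le> a" "a < n" and ib: "1 \<le> b" "b < n" and ic: "1 \<le> c" "c < n"
    using a0 an b0 bn c0 cn box by auto
  have n0: "0 \<le> int n" by simp
  have F3d: "max 0 (int a + int b - int n) < C a b c - C a b (c-1)"
  proof (rule ccontr)
    assume "\<not> ?thesis"
    then have h: "C a b c - C a b (c-1) \<le> max 0 (int a + int b - int n)" by (simp only: not_less)
    show False
    proof (rule abstract_down[OF lt _ h])
      show "max 0 (int a + int b - int n) \<le> D a b c - D a b (c-1)"
        using step_ok_lo[OF csh_step3[OF D box(1,2) ic(1) box(3)]] .
      show "int n * C a b (c-1) - int a * int b * int (c-1) \<le> int n * C a b c - int a * int b * int c"
        if "D a b (c-1) < C a b (c-1)" using maxq[OF box(1,2) _ that] box by simp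
      show "int a * int b * int c - int a * int b * int (c-1) = int a * int b"
        using ic by (simp add: of_nat_diff algebra_simps)
      show "int n * max 0 (int a + int b - int n) < int a * int b" by (rule down_arith[OF ia ib])
    qed (rule n0)
  qed
  have F3u: "C a b (c+1) - C a b c < min (int a) (int b)"
  proof (rule ccontr)
    assume "\<not> ?thesis"
    then have h: "min (int a) (int b) \<le> C a b (c+1) - C a b c" by (simp only: not_less)
    show False
    proof (rule abstract_up[OF lt _ h])
      show "D a b (c+1) - D a b c \<le> min (int a) (int b)"
        using step_ok_hi[OF csh_step3[OF D box(1,2), of "c+1"]] ic by simp
      show "int n * C a b (c+1) - int a * int b * int (c+1) \<le> int n * C a b c - int a * int b * int c"
        if "D a b (c+1) < C a b (c+1)" using maxq[OF box(1,2) _ that] ic by simp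
      show "int a * int b * int (c+1) - int a * int b * int c = int a * int b"
        by (simp add: algebra_simps)
      show "int a * int b < int n * min (int a) (int b)" by (rule up_arith[OF ia ib])
    qed (rule n0)
  qed
  have F2d: "max 0 (int a + int c - int n) < C a b c - C a (b-1) c"
  proof (rule ccontr)
    assume "\<not> ?thesis"
    then have h: "C a b c - C a (b-1) c \<le> max 0 (int a + int c - int n)" by (simp only: not_less)
    show False
    proof (rule abstract_down[OF lt _ h])
      show "max 0 (int a + int c - int n) \<le> D a b c - D a (b-1) c"
        using step_ok_lo[OF csh_step2[OF D box(1,3) ib(1) box(2)]] .
      show "int n * C a (b-1) c - int a * int (b-1) * int c \<le> int n * C a b c - int a * int b * int c"
        if "D a (b-1) c < C a (b-1) c" using maxq[OF box(1) _ box(3) that] box by simp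
      show "int a * int b * int c - int a * int (b-1) * int c = int a * int c"
        using ib by (simp add: of_nat_diff algebra_simps)
      show "int n * max 0 (int a + int c - int n) < int a * int c" by (rule down_arith[OF ia ic])
    qed (rule n0)
  qed
  have F2u: "C a (b+1) c - C a b c < min (int a) (int c)"
  proof (rule ccontr)
    assume "\<not> ?thesis"
    then have h: "min (int a) (int c) \<le> C a (b+1) c - C a b c" by (simp only: not_less)
    show False
    proof (rule abstract_up[OF lt _ h])
      show "D a (b+1) c - D a b c \<le> min (int a) (int c)"
        using step_ok_hi[OF csh_step2[OF D box(1,3), of "b+1"]] ib by simp
      show "int n * C a (b+1) c - int a * int (b+1) * int c \<le> int n * C a b c - int a * int b * int c"
        if "D a (b+1) c < C a (b+1) c" using maxq[OF box(1) _ box(3) that] ib by simp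
      show "int a * int (b+1) * int c - int a * int b * int c = int a * int c"
        by (simp add: algebra_simps)
      show "int a * int c < int n * min (int a) (int c)" by (rule up_arith[OF ia ic])
    qed (rule n0)
  qed
  have F1d: "max 0 (int b + int c - int n) < C a b c - C (a-1) b c"
  proof (rule ccontr)
    assume "\<not> ?thesis"
    then have h: "C a b c - C (a-1) b c \<le> max 0 (int b + int c - int n)" by (simp only: not_less)
    show False
    proof (rule abstract_down[OF lt _ h])
      show "max 0 (int b + int c - int n) \<le> D a b c - D (a-1) b c"
        using step_ok_lo[OF csh_step1[OF D box(2,3) ia(1) box(1)]] .
      show "int n * C (a-1) b c - int (a-1) * int b * int c \<le> int n * C a b c - int a * int b * int c"
        if "D (a-1) b c < C (a-1) b c" using maxq[OF _ box(2,3) that] box by simp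
      show "int a * int b * int c - int (a-1) * int b * int c = int b * int c"
        using ia by (simp add: of_nat_diff algebra_simps)
      show "int n * max 0 (int b + int c - int n) < int b * int c" by (rule down_arith[OF ib ic])
    qed (rule n0)
  qed
  have F1u: "C (a+1) b c - C a b c < min (int b) (int c)"
  proof (rule ccontr)
    assume "\<not> ?thesis"
    then have h: "min (int b) (int c) \<le> C (a+1) b c - C a b c" by (simp only: not_less)
    show False
    proof (rule abstract_up[OF lt _ h])
      show "D (a+1) b c - D a b c \<le> min (int b) (int c)"
        using step_ok_hi[OF csh_step1[OF D box(2,3), of "a+1"]] ia by simp
      show "int n * C (a+1) b c - int (a+1) * int b * int c \<le> int n * C a b c - int a * int b * int c"
        if "D (a+1) b c < C (a+1) b c" using maxq[OF _ box(2,3) that] ia by simp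
      show "int (a+1) * int b * int c - int a * int b * int c = int b * int c"
        by (simp add: algebra_simps)
      show "int b * int c < int n * min (int b) (int c)" by (rule up_arith[OF ib ic])
    qed (rule n0)
  qed
  define E where "E i j k = (if i = a \<and> j = b \<and> k = c then C i j k - 1 else C i j k)" for i j k
  have ECSH: "E \<in> CSH n"
    unfolding CSH_def corner_sum_hm_def
  proof (intro CollectI conjI allI impI ballI)
    fix i j k :: nat assume "n < i \<or> n < j \<or> n < k"
    then show "E i j k = 0" using box csh_out[OF C] unfolding E_def by auto
  next
    fix i j assume ij: "i \<le> n" "j \<le> n"
    show "E i j 0 = 0" "E i 0 j = 0" "E 0 i j = 0"
      using PC(1-3)[OF ij] a0 b0 c0 unfolding E_def by auto
    show "E i j n = int i * int j" "E i n j = int i * int j" "E n i j = int i * int j"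
      using PC(4-6)[OF ij] an bn cn unfolding E_def by auto
  next
    fix i j k assume ij: "i \<le> n" "j \<le> n" and k: "k \<in> {1..n}"
    have k1: "1 \<le> k" "k \<le> n" using k by auto
    have Cs: "step_ok n i j (C i j k - C i j (k-1))" using csh_step3[OF C ij k1] .
    show "step_ok n i j (E i j k - E i j (k - 1))"
    proof (cases "i = a \<and> j = b \<and> k = c")
      case True
      then have "E i j k - E i j (k-1) = (C i j k - C i j (k-1)) - 1" using k1 unfolding E_def by auto
      then show ?thesis using step_ok_dec[OF Cs] F3d True by simp
    next
      case F: False
      show ?thesis
      proof (cases "i = a \<and> j = b \<and> k = c + 1")
        case True
        then have "E i j k - E i j (k-1) = (C i j k - C i j (k-1)) + 1" unfolding E_def by auto
        then show ?thesis using step_ok_inc[OF Cs] F3u True by simp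
      next
        case False
        then have "E i j k - E i j (k-1) = C i j k - C i j (k-1)" using F k1 unfolding E_def by auto
        then show ?thesis using Cs by simp
      qed
    qed
    have Cs2: "step_ok n i j (C i k j - C i (k-1) j)" using csh_step2[OF C ij k1] .
    show "step_ok n i j (E i k j - E i (k - 1) j)"
    proof (cases "i = a \<and> k = b \<and> j = c")
      case True
      then have "E i k j - E i (k-1) j = (C i k j - C i (k-1) j) - 1" using k1 unfolding E_def by auto
      then show ?thesis using step_ok_dec[OF Cs2] F2d True by simp
    next
      case F: False
      show ?thesis
      proof (cases "i = a \<and> k = b + 1 \<and> j = c")
        case True
        then have "E i k j - E i (k-1) j = (C i k j - C i (k-1) j) + 1" unfolding E_def by auto
        then show ?thesis using step_ok_inc[OF Cs2] F2u True by simp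
      next
        case False
        then have "E i k j - E i (k-1) j = C i k j - C i (k-1) j" using F k1 unfolding E_def by auto
        then show ?thesis using Cs2 by simp
      qed
    qed
    have Cs1: "step_ok n i j (C k i j - C (k-1) i j)" using csh_step1[OF C ij k1] .
    show "step_ok n i j (E k i j - E (k - 1) i j)"
    proof (cases "k = a \<and> i = b \<and> j = c")
      case True
      then have "E k i j - E (k-1) i j = (C k i j - C (k-1) i j) - 1" using k1 unfolding E_def by auto
      then show ?thesis using step_ok_dec[OF Cs1] F1d True by simp
    next
      case F: False
      show ?thesis
      proof (cases "k = a + 1 \<and> i = b \<and> j = c")
        case True
        then have "E k i j - E (k-1) i j = (C k i j - C (k-1) i j) + 1" unfolding E_def by auto
        then show ?thesis using step_ok_inc[OF Cs1] F1u True by simp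
      next
        case False
        then have "E k i j - E (k-1) i j = C k i j - C (k-1) i j" using F k1 unfolding E_def by auto
        then show ?thesis using Cs1 by simp
      qed
    qed
  qed
  have le1: "cs_le n C E" unfolding cs_le_def E_def by auto
  have le2: "cs_le n E D" unfolding cs_le_def E_def using Dle lt by auto
  have "sC n E = (\<Sum>p\<in>Box n. (case p of (i,j,k) \<Rightarrow> C i j k) - (if p = (a,b,c) then 1 else 0))"
    unfolding sC_def by (rule sum.cong) (auto simp: E_def split: if_splits)
  also have "\<dots> = sC n C - 1"
    using box unfolding sC_def by (simp add: sum_subtractf Box_def)
  finally have "sC n E = sC n C - 1" .
  then show ?thesis using ECSH le1 le2 by blast
qed

lemma chain_card:
  assumes C: "C \<in> CSH n" and S: "maximal_chain n (Mmin n) C S"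
  shows "finite S \<and> int (card S) = sC n (Mmin n) - sC n C + 1"
proof -
  let ?M = "Mmin n"
  let ?s = "sC n"
  have ch: "is_chain n S" and MS: "?M \<in> S" and CS: "C \<in> S" and Ssub: "S \<subseteq> cs_interval n ?M C"
    and maxl: "\<And>T. is_chain n T \<Longrightarrow> T \<subseteq> cs_interval n ?M C \<Longrightarrow> S \<subseteq> T \<Longrightarrow> T = S"
    using S unfolding maximal_chain_def by blast+
  have SCSH: "S \<subseteq> CSH n" using ch unfolding is_chain_def by blast
  have comp: "\<And>x y. x \<in> S \<Longrightarrow> y \<in> S \<Longrightarrow> cs_le n x y \<or> cs_le n y x"
    using ch unfolding is_chain_def by blast
  have fin: "finite S" using SCSH finite_CSH finite_subset by blast
  have intv: "cs_le n ?M X \<and> cs_le n X C" if "X \<in> S" for X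
    using Ssub that unfolding cs_interval_def by blast
  have inj: "inj_on ?s S"
  proof (rule inj_onI)
    fix x y assume xy: "x \<in> S" "y \<in> S" "?s x = ?s y"
    show "x = y"
    proof (cases "cs_le n x y")
      case True then show ?thesis using sC_eq[of x n y] xy SCSH by blast
    next
      case False
      then have "cs_le n y x" using comp xy by blast
      then show ?thesis using sC_eq[of y n x] xy SCSH by force
    qed
  qed
  have img: "?s ` S = {?s C..?s ?M}"
  proof
    show "?s ` S \<subseteq> {?s C..?s ?M}"
    proof
      fix v assume "v \<in> ?s ` S"
      then obtain X where X: "X \<in> S" "v = ?s X" by blast
      have "?s C \<le> ?s X" using intv[OF X(1)] sC_mono by blast
      moreover have "?s X \<le> ?s ?M" using intv[OF X(1)] sC_mono by blast
      ultimately show "v \<in> {?s C..?s ?M}" using X(2) by simp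
    qed
  next
    show "{?s C..?s ?M} \<subseteq> ?s ` S"
    proof
      fix t assume t: "t \<in> {?s C..?s ?M}"
      show "t \<in> ?s ` S"
      proof (rule ccontr)
        assume nt: "t \<notin> ?s ` S"
        define A where "A = {X \<in> S. t < ?s X}"
        define B where "B = {Y \<in> S. ?s Y < t}"
        have "?s ?M \<noteq> t" using nt MS by blast
        then have MA: "?M \<in> A" using MS t unfolding A_def by simp
        have "?s C \<noteq> t" using nt CS by blast
        then have CB: "C \<in> B" using CS t unfolding B_def by simp
        have finA: "finite A" "finite B" using fin unfolding A_def B_def by auto
        have "Min (?s ` A) \<in> ?s ` A" using MA finA by (intro Min_in) auto
        then obtain X where X: "X \<in> A" "?s X = Min (?s ` A)" by auto
        have Xmin: "?s X \<le> ?s Z" if "Z \<in> A" for Z using X(2) finA that by simp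
        have "Max (?s ` B) \<in> ?s ` B" using CB finA by (intro Max_in) auto
        then obtain Y where Y: "Y \<in> B" "?s Y = Max (?s ` B)" by auto
        have Ymax: "?s Z \<le> ?s Y" if "Z \<in> B" for Z using Y(2) finA that by simp
        have XS: "X \<in> S" "t < ?s X" using X(1) unfolding A_def by auto
        have YS: "Y \<in> S" "?s Y < t" using Y(1) unfolding B_def by auto
        have XC: "X \<in> CSH n" "Y \<in> CSH n" using XS YS SCSH by auto
        have XY: "cs_le n X Y"
        proof (rule ccontr)
          assume "\<not> cs_le n X Y"
          then have "cs_le n Y X" using comp XS YS by blast
          then have "?s X \<le> ?s Y" by (rule sC_mono)
          then show False using XS YS by simp
        qed
        have "X \<noteq> Y" using XS YS by auto
        then obtain E where E: "E \<in> CSH n" "cs_le n X E" "cs_le n E Y" "?s E = ?s X - 1"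
          using down_step[OF XC XY] by blast
        have ES: "E \<notin> S"
        proof
          assume "E \<in> S"
          moreover have "?s E \<noteq> t" using nt \<open>E \<in> S\<close> by blast
          ultimately have "E \<in> A" using E(4) XS unfolding A_def by simp
          then have "?s X \<le> ?s E" by (rule Xmin)
          then show False using E(4) by simp
        qed
        have compE: "cs_le n Z E \<or> cs_le n E Z" if "Z \<in> S" for Z
        proof -
          have "?s Z \<noteq> t" using nt that by blast
          then consider "t < ?s Z" | "?s Z < t" by linarith
          then show ?thesis
          proof cases
            case 1
            then have "Z \<in> A" using that unfolding A_def by auto
            then have le: "?s X \<le> ?s Z" by (rule Xmin)
            show ?thesis
            proof (cases "cs_le n Z X")
              case True then show ?thesis using cs_le_trans E(2) by blast
            next
              case False
              then have "cs_le n X Z" using comp that XS by blast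
              moreover have "?s Z \<le> ?s X" using \<open>cs_le n X Z\<close> by (rule sC_mono)
              ultimately have "?s X = ?s Z" using le by simp
              then have "X = Z" using sC_eq[of X n Z] \<open>cs_le n X Z\<close> XC SCSH that by blast
              then show ?thesis using E(2) by blast
            qed
          next
            case 2
            then have "Z \<in> B" using that unfolding B_def by auto
            then have le: "?s Z \<le> ?s Y" by (rule Ymax)
            show ?thesis
            proof (cases "cs_le n Y Z")
              case True then show ?thesis using cs_le_trans E(3) by blast
            next
              case False
              then have "cs_le n Z Y" using comp that YS by blast
              moreover have "?s Y \<le> ?s Z" using \<open>cs_le n Z Y\<close> by (rule sC_mono)
              ultimately have "?s Z = ?s Y" using le by simp
              then have "Z = Y" using sC_eq[of Z n Y] \<open>cs_le n Z Y\<close> XC SCSH that by blast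
              then show ?thesis using E(3) by blast
            qed
          qed
        qed
        have "is_chain n (insert E S)"
          unfolding is_chain_def
        proof (intro conjI ballI)
          show "insert E S \<subseteq> CSH n" using SCSH E(1) by blast
        next
          fix x y assume xy: "x \<in> insert E S" "y \<in> insert E S"
          show "cs_le n x y \<or> cs_le n y x"
          proof (cases "x = E")
            case True
            show ?thesis
            proof (cases "y = E")
              case True then show ?thesis using \<open>x = E\<close> cs_le_refl by simp
            next
              case False then have "y \<in> S" using xy by blast
              then show ?thesis using compE[of y] \<open>x = E\<close> by blast
            qed
          next
            case False then have xS: "x \<in> S" using xy by blast
            show ?thesis
            proof (cases "y = E")
              case True then show ?thesis using compE[OF xS] by blast
            next
              case False then have "y \<in> S" using xy by blast
              then show ?thesis using comp xS by blast
            qed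
          qed
        qed
        moreover have "insert E S \<subseteq> cs_interval n ?M C"
        proof -
          have "cs_le n ?M E" using intv[OF XS(1)] E(2) cs_le_trans by blast
          moreover have "cs_le n E C" using intv[OF YS(1)] E(3) cs_le_trans by blast
          ultimately show ?thesis using Ssub E(1) unfolding cs_interval_def by auto
        qed
        ultimately have "insert E S = S" using maxl by blast
        then show False using ES by blast
      qed
    qed
  qed
  have "card S = card (?s ` S)" using inj by (simp add: card_image)
  also have "\<dots> = nat (?s ?M - ?s C + 1)" unfolding img by simp
  finally have "card S = nat (?s ?M - ?s C + 1)" .
  moreover have "?s C \<le> ?s ?M" using sC_mono[OF M_max[OF C]] .
  ultimately show ?thesis using fin by simp
qed

lemma chain_exists:
  assumes C: "C \<in> CSH n"
  shows "\<exists>S. maximal_chain n (Mmin n) C S"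
proof -
  let ?M = "Mmin n"
  let ?I = "cs_interval n ?M C"
  define P where "P T \<longleftrightarrow> is_chain n T \<and> T \<subseteq> ?I \<and> ?M \<in> T \<and> C \<in> T" for T
  have MC: "cs_le n ?M C" by (rule M_max[OF C])
  have finI: "finite ?I" using finite_CSH unfolding cs_interval_def by simp
  have P0: "P {?M, C}"
    unfolding P_def is_chain_def cs_interval_def using MC M_in_CSH C cs_le_refl by blast
  have "\<forall>T. P T \<longrightarrow> card T < card ?I + 1"
  proof (intro allI impI)
    fix T assume "P T"
    then have "T \<subseteq> ?I" unfolding P_def by blast
    then have "card T \<le> card ?I" using finI by (rule card_mono[rotated])
    then show "card T < card ?I + 1" by simp
  qed
  then obtain S where S: "P S" and Smax: "\<And>T. P T \<Longrightarrow> card T \<le> card S"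
    using ex_has_greatest_nat[of P "{?M, C}" card "card ?I + 1"] P0 by blast
  have "maximal_chain n ?M C S"
    unfolding maximal_chain_def
  proof (intro conjI allI impI)
    show "is_chain n S" "?M \<in> S" "C \<in> S" "S \<subseteq> ?I" using S unfolding P_def by auto
  next
    fix T assume T: "is_chain n T \<and> T \<subseteq> ?I \<and> S \<subseteq> T"
    then have PT: "P T" using S unfolding P_def by auto
    have "finite T" using T finI finite_subset by blast
    moreover have "card T \<le> card S" using Smax[OF PT] .
    ultimately show "T = S" using T card_seteq by blast
  qed
  then show ?thesis by blast
qed

theorem mainTheorem11:
  fixes n :: nat and C :: hypermatrix
  assumes "C \<in> CSH n"
  shows "(\<exists>S. maximal_chain n (Mmin n) C S) \<and>
         (\<forall>S. maximal_chain n (Mmin n) C S \<longrightarrow>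
            finite S \<and>
            real (card S) - 1 =
              (69 * real n ^ 5 + 180 * real n ^ 4 + 170 * real n ^ 3 + 60 * real n ^ 2
                 + (4::real) powi (1 + (-1::int) ^ n) * real n) / 480
              - (\<Sum>i=1..n. \<Sum>j=1..n. real (n - i + 1) * real (n - j + 1)
                    * real_of_int (int n - L_val n C i j + 1)))"
proof (intro conjI allI impI)
  show "\<exists>S. maximal_chain n (Mmin n) C S" by (rule chain_exists[OF assms])
next
  fix S assume S: "maximal_chain n (Mmin n) C S"
  have cc: "finite S \<and> int (card S) = sC n (Mmin n) - sC n C + 1" by (rule chain_card[OF assms S])
  then show "finite S" by simp
  have p: "(4::real) powi (1 + (-1::int) ^ n) = (if even n then 16 else 1)"
    by (cases "even n") simp_all
  have tot: "1440 * sC n (Mmin n) = 3 * (69 * int n^5 + 180 * int n^4 + 170 * int n^3 + 60 * int n^2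
     + (if even n then 16 else 1) * int n)"
    unfolding sC_nested using total[of n] unfolding gs_def .
  have totR: "real_of_int (sC n (Mmin n)) = (69 * real n ^ 5 + 180 * real n ^ 4 + 170 * real n ^ 3 + 60 * real n ^ 2
                 + (if even n then 16 else 1) * real n) / 480"
  proof -
    have "real_of_int (1440 * sC n (Mmin n)) = real_of_int (3 * (69 * int n^5 + 180 * int n^4 + 170 * int n^3 + 60 * int n^2
     + (if even n then 16 else 1) * int n))" using tot by simp
    then show ?thesis by (cases "even n") (simp_all add: field_simps)
  qed
  have Gid: "(\<Sum>i=1..n. \<Sum>j=1..n. real (n - i + 1) * real (n - j + 1) * real_of_int (int n - L_val n C i j + 1))
      = real_of_int (sC n C)"
  proof -
    have "(\<Sum>i=1..n. \<Sum>j=1..n. real (n - i + 1) * real (n - j + 1) * real_of_int (int n - L_val n C i j + 1))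
        = real_of_int (\<Sum>i=1..n. \<Sum>j=1..n. (int n - int i + 1) * (int n - int j + 1) * (int n - L_val n C i j + 1))"
      by (simp add: of_int_sum) (intro sum.cong refl, auto simp: of_nat_diff algebra_simps)
    also have "\<dots> = real_of_int (sC n C)"
      using G_identity[OF csh_cs[OF assms]] by (simp add: sC_nested)
    finally show ?thesis .
  qed
  have "real (card S) - 1 = real_of_int (sC n (Mmin n)) - real_of_int (sC n C)"
  proof -
    have "real (card S) = real_of_int (int (card S))" by simp
    then show ?thesis using cc by simp
  qed
  then show "real (card S) - 1 =
              (69 * real n ^ 5 + 180 * real n ^ 4 + 170 * real n ^ 3 + 60 * real n ^ 2
                 + (4::real) powi (1 + (-1::int) ^ n) * real n) / 480
              - (\<Sum>i=1..n. \<Sum>j=1..n. real (n - i + 1) * real (n - j + 1)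
                    * real_of_int (int n - L_val n C i j + 1))"
    unfolding Gid p totR by simp
qed

end
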